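(* Fix a client $D_j$ and let the random variables $Z_1,\dots,Z_{k/\epsilon}$ be as described in the context. Then for every $\ell\in[k]$, every $t\in[\ell-1]$ and every $r\in\{(\ell-1)/\epsilon+1,\dots,\ell/\epsilon\}$, $$H_r(t-1):=\Pr\Big[\sum_{r'=1}^{r-1}Z_{r'}\le t-1 \;\Big|\; Z_r=1\Big]\;\le\; e^{-r\epsilon}\left(\frac{e\, r\,\epsilon}{t}\right)^t.$$
   Context: Instance: clients $D_1,\dots,D_n$, facilities $F_1,\dots,F_m$, nonnegative costs $c_{i,j}$, integer $k\le m$, harmonic weights $w_\ell=1/\ell$ ($\ell\in[k]$). Consider the linear program: minimize $\sum_{j=1}^n\sum_{\ell=1}^k\sum_{i=1}^m w_\ell x^\ell_{ij}c_{ij}$ subject to $\sum_{i=1}^m y_i=k$; $\sum_{\ell=1}^k x^\ell_{ij}\le y_i$ for all $i\in[m],j\in[n]$; $\sum_{i=1}^m x^\ell_{ij}\ge 1$ for all $j\in[n],\ell\in[k]$; $y_i,x^\ell_{ij}\in[0,1]$. Let $(x^*,y^* )$ be an optimal (rational) solution. Dependent rounding (DR) with a fixed tournament tree: fix a rooted binary tree with $m$ leaves, leaf $i$ holding variable $y_i$ initialized to $y^*_i$; repeatedly take two nonempty sibling nodes whose parent is empty. If both hold fractional variables $y_a,y_b$ with $s=y_a+y_b$: if $s\le 1$, with probability $y_a/s$ set $(y_a,y_b)\leftarrow(s,0)$, otherwise $(0,s)$; if $s>1$, with probability $(1-y_b)/(2-s)$ set $(y_a,y_b)\leftarrow(1,s-1)$,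 otherwise $(s-1,1)$. A variable that is still fractional is promoted to the parent; if both became integral a dummy $\bot$ is promoted; if one node holds $\bot$ (or an already integral variable), the other node's content is promoted unchanged. At the end all variables are in $\{0,1\}$; let $Y_i$ be the final value of $y_i$. Now fix the client $D_j$ and renumber facilities so that $c_{1,j}\le c_{2,j}\le\dots\le c_{m,j}$ (ties broken arbitrarily but fixed). Fix $\epsilon>0$ such that $1/\epsilon$ and all $y^*_i/\epsilon$ are integers. Let $\mathrm{submax}(0)=0$, $\mathrm{submax}(i)=\mathrm{submax}(i-1)+y^*_i/\epsilon$, and $\mathrm{sub}(i)=\{\mathrm{submax}(i-1)+1,\dots,\mathrm{submax}(i)\}$, so $\{1,\dots,k/\epsilon\}$ is partitioned into the blocks $\mathrm{sub}(i)$. Define $Z_1,\dots,Z_{k/\epsilon}\in\{0,1\}$ as follows: for each $i$ with $Y_i=1$, independently of everything else choose one index $r\in\mathrm{sub}(i)$ uniformly at random and set $Z_r=1$; all other $Z_r$ are $0$. Thus $Y_i=\sum_{r\in\mathrm{sub}(i)}Z_r$ and $\Pr[Z_r=1]=\epsilon$ for all $r$. *)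

theory Defs
  imports "HOL-Probability.Probability"
begin

text \<open>Facilities are indexed 1..m, clients 1..n, levels 1..k.
  c i j is the cost of facility i for client j; x l i j is the LP variable x^l_{ij}.\<close>

definition lp_feasible ::
  "nat \<Rightarrow> nat \<Rightarrow> nat \<Rightarrow> (nat \<Rightarrow> nat \<Rightarrow> nat \<Rightarrow> real) \<Rightarrow> (nat \<Rightarrow> real) \<Rightarrow> bool" where
  "lp_feasible n m k x y \<longleftrightarrow>
     (\<Sum>i=1..m. y i) = real k \<and>
     (\<forall>i\<in>{1..m}. \<forall>j\<in>{1..n}. (\<Sum>l=1..k. x l i j) \<le> y i) \<and>
     (\<forall>j\<in>{1..n}. \<forall>l\<in>{1..k}. (\<Sum>i=1..m. x l i j) \<ge> 1) \<and>
     (\<forall>i\<in>{1..m}. 0 \<le> y i \<and> y i \<le> 1) \<and>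
     (\<forall>l\<in>{1..k}. \<forall>i\<in>{1..m}. \<forall>j\<in>{1..n}. 0 \<le> x l i j \<and> x l i j \<le> 1)"

definition lp_obj ::
  "nat \<Rightarrow> nat \<Rightarrow> nat \<Rightarrow> (nat \<Rightarrow> nat \<Rightarrow> real) \<Rightarrow> (nat \<Rightarrow> nat \<Rightarrow> nat \<Rightarrow> real) \<Rightarrow> real" where
  "lp_obj n m k c x = (\<Sum>j=1..n. \<Sum>l=1..k. \<Sum>i=1..m. (1 / real l) * x l i j * c i j)"

definition lp_optimal ::
  "nat \<Rightarrow> nat \<Rightarrow> nat \<Rightarrow> (nat \<Rightarrow> nat \<Rightarrow> real) \<Rightarrow> (nat \<Rightarrow> nat \<Rightarrow> nat \<Rightarrow> real) \<Rightarrow> (nat \<Rightarrow> real) \<Rightarrow> bool" where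
  "lp_optimal n m k c x y \<longleftrightarrow> lp_feasible n m k x y \<and>
     (\<forall>x' y'. lp_feasible n m k x' y' \<longrightarrow> lp_obj n m k c x \<le> lp_obj n m k c x')"

datatype ttree = Leaf nat | Node ttree ttree

fun leaves :: "ttree \<Rightarrow> nat list" where
  "leaves (Leaf i) = [i]"
| "leaves (Node l r) = leaves l @ leaves r"

text \<open>Content promoted to the parent: Some a (the fractional variable y_a) or None (dummy bottom).\<close>
definition promote :: "nat \<Rightarrow> real \<Rightarrow> nat option" where
  "promote a v = (if 0 < v \<and> v < 1 then Some a else None)"

fun dr_step :: "(nat \<Rightarrow> real) \<Rightarrow> nat option \<Rightarrow> nat option \<Rightarrow> ((nat \<Rightarrow> real) \<times> nat option) pmf" where
  "dr_step f (Some a) (Some b) =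
     (let ya = f a; yb = f b; s = ya + yb in
      if s \<le> 1 then
        map_pmf (\<lambda>c. if c then (f(a := s, b := 0), promote a s) else (f(a := 0, b := s), promote b s))
          (bernoulli_pmf (ya / s))
      else
        map_pmf (\<lambda>c. if c then (f(a := 1, b := s - 1), promote b (s - 1))
                          else (f(a := s - 1, b := 1), promote a (s - 1)))
          (bernoulli_pmf ((1 - yb) / (2 - s))))"
| "dr_step f (Some a) None = return_pmf (f, Some a)"
| "dr_step f None (Some b) = return_pmf (f, Some b)"
| "dr_step f None None = return_pmf (f, None)"

text \<open>Result of processing a subtree: current values of the variables at its leaves
  (0 elsewhere) and the promoted content.  Integral leaf variables behave like bottom.\<close>
fun dr :: "(nat \<Rightarrow> real) \<Rightarrow> ttree \<Rightarrow> ((nat \<Rightarrow> real) \<times> nat option) pmf" where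
  "dr y (Leaf i) = return_pmf ((\<lambda>_. 0)(i := y i), promote i (y i))"
| "dr y (Node l r) =
     bind_pmf (dr y l) (\<lambda>(f1, p1). bind_pmf (dr y r) (\<lambda>(f2, p2).
       dr_step (\<lambda>i. if i \<in> set (leaves l) then f1 i else f2 i) p1 p2))"

definition Y_dist :: "(nat \<Rightarrow> real) \<Rightarrow> ttree \<Rightarrow> (nat \<Rightarrow> real) pmf" where
  "Y_dist y T = map_pmf fst (dr y T)"

text \<open>sigma p is the facility at sorted position p (positions 1..m).\<close>
definition submax :: "(nat \<Rightarrow> real) \<Rightarrow> (nat \<Rightarrow> nat) \<Rightarrow> real \<Rightarrow> nat \<Rightarrow> real" where
  "submax y \<sigma> \<epsilon> p = (\<Sum>q=1..p. y (\<sigma> q) / \<epsilon>)"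

definition sub_blk :: "(nat \<Rightarrow> real) \<Rightarrow> (nat \<Rightarrow> nat) \<Rightarrow> real \<Rightarrow> nat \<Rightarrow> nat set" where
  "sub_blk y \<sigma> \<epsilon> p = {r. submax y \<sigma> \<epsilon> (p - 1) < real r \<and> real r \<le> submax y \<sigma> \<epsilon> p}"

text \<open>Distribution of the set {r. Z_r = 1}: for every position p whose facility is opened
  (Y = 1), independently pick a uniform index of sub p.\<close>
definition Z_dist :: "nat \<Rightarrow> (nat \<Rightarrow> real) \<Rightarrow> ttree \<Rightarrow> (nat \<Rightarrow> nat) \<Rightarrow> real \<Rightarrow> nat set pmf" where
  "Z_dist m y T \<sigma> \<epsilon> =
     bind_pmf (Y_dist y T) (\<lambda>Y.
       map_pmf (\<lambda>ch. ch ` {p\<in>{1..m}. Y (\<sigma> p) = 1})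
         (Pi_pmf {p\<in>{1..m}. Y (\<sigma> p) = 1} 0 (\<lambda>p. pmf_of_set (sub_blk y \<sigma> \<epsilon> p))))"

definition H :: "nat \<Rightarrow> (nat \<Rightarrow> real) \<Rightarrow> ttree \<Rightarrow> (nat \<Rightarrow> nat) \<Rightarrow> real \<Rightarrow> nat \<Rightarrow> nat \<Rightarrow> real" where
  "H m y T \<sigma> \<epsilon> r s =
     measure_pmf.prob (Z_dist m y T \<sigma> \<epsilon>) {S. card (S \<inter> {1..<r}) \<le> s \<and> r \<in> S}
     / measure_pmf.prob (Z_dist m y T \<sigma> \<epsilon>) {S. r \<in> S}"

end

theory Submission
  imports Defs
begin

definition goodL :: "(nat \<Rightarrow> real) \<Rightarrow> nat set \<Rightarrow> (nat \<Rightarrow> real) \<Rightarrow> nat option \<Rightarrow> bool" where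
  "goodL y L f p \<longleftrightarrow> (\<forall>i\<in>L. 0 \<le> f i \<and> f i \<le> 1) \<and> (\<forall>i\<in>L. y i = 0 \<longrightarrow> f i = 0)
     \<and> (\<forall>i\<in>L. p \<noteq> Some i \<longrightarrow> f i = 0 \<or> f i = 1)
     \<and> (\<forall>a. p = Some a \<longrightarrow> a \<in> L \<and> 0 < f a \<and> f a < 1) \<and> sum f L = sum y L"

lemma set_pmf_dr_step_SS:
  assumes "z \<in> set_pmf (dr_step f (Some a) (Some b))"
  shows "(f a + f b \<le> 1 \<and> (z = (f(a := f a + f b, b := 0), promote a (f a + f b)) \<or>
                             z = (f(a := 0, b := f a + f b), promote b (f a + f b)))) \<or>
         (f a + f b > 1 \<and> (z = (f(a := 1, b := f a + f b - 1), promote b (f a + f b - 1)) \<or>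
                             z = (f(a := f a + f b - 1, b := 1), promote a (f a + f b - 1))))"
  using assms by (auto simp: Let_def split: if_splits)

lemma sum_two:
  assumes "finite L" "a \<in> L" "b \<in> L" "a \<noteq> b"
  shows "sum h L = h a + h b + sum h (L - {a, b})"
proof -
  have "sum h L = h a + sum h (L - {a})" using assms by (simp add: sum.remove)
  also have "sum h (L - {a}) = h b + sum h (L - {a} - {b})" using assms by (simp add: sum.remove)
  also have "L - {a} - {b} = L - {a, b}" by auto
  finally show ?thesis by (simp add: add.assoc)
qed

lemma sum_upd2:
  fixes f :: "'a \<Rightarrow> real"
  assumes "finite L" "a \<in> L" "b \<in> L" "a \<noteq> b"
  shows "sum (f(a := u, b := v)) L = sum f L - f a - f b + u + v"
proof -
  have c: "sum (f(a := u, b := v)) (L - {a, b}) = sum f (L - {a, b})" by (rule sum.cong) auto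
  have "sum (f(a := u, b := v)) L = (f(a:=u,b:=v)) a + (f(a:=u,b:=v)) b + sum (f(a:=u,b:=v)) (L-{a,b})"
    by (rule sum_two[OF assms])
  also have "\<dots> = u + v + sum f (L-{a,b})" using assms c by simp
  also have "sum f (L-{a,b}) = sum f L - f a - f b" using sum_two[OF assms, of f] by linarith
  finally have X: "sum (f(a := u, b := v)) L = u + v + (sum f L - f a - f b)" .
  show ?thesis using X by linarith
qed

lemma good_upd:
  assumes fin: "finite L" and aL: "a \<in> L" and bL: "b \<in> L" and ab: "a \<noteq> b"
    and g01: "\<forall>i\<in>L. 0 \<le> g i \<and> g i \<le> 1" and gy: "\<forall>i\<in>L. y i = 0 \<longrightarrow> g i = 0"
    and gint: "\<forall>i\<in>L. i \<noteq> a \<longrightarrow> i \<noteq> b \<longrightarrow> g i = 0 \<or> g i = 1"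
    and ga: "0 < g a" and gb: "0 < g b"
    and gs: "sum g L = sum y L" and uv: "u + v = g a + g b"
    and u: "0 \<le> u" "u \<le> 1" and v: "0 \<le> v" "v \<le> 1"
    and pp: "(p = promote a u \<and> (v = 0 \<or> v = 1)) \<or> (p = promote b v \<and> (u = 0 \<or> u = 1))"
  shows "goodL y L (g(a := u, b := v)) p"
  unfolding goodL_def
proof (intro conjI)
  show "\<forall>i\<in>L. 0 \<le> (g(a := u, b := v)) i \<and> (g(a := u, b := v)) i \<le> 1"
    using g01 u v by auto
  show "\<forall>i\<in>L. y i = 0 \<longrightarrow> (g(a := u, b := v)) i = 0"
    using gy ga gb aL bL by auto
  show "\<forall>i\<in>L. p \<noteq> Some i \<longrightarrow> (g(a := u, b := v)) i = 0 \<or> (g(a := u, b := v)) i = 1"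
    using gint pp u v ab by (auto simp: promote_def split: if_splits)
  show "\<forall>a'. p = Some a' \<longrightarrow> a' \<in> L \<and> 0 < (g(a := u, b := v)) a' \<and> (g(a := u, b := v)) a' < 1"
    using pp aL bL ab by (auto simp: promote_def split: if_splits)
  show "sum (g(a := u, b := v)) L = sum y L"
    using sum_upd2[OF fin aL bL ab, of g u v] gs uv by simp
qed

lemma good_step:
  assumes fin: "finite L" and
    g01: "\<forall>i\<in>L. 0 \<le> g i \<and> g i \<le> 1" and gy: "\<forall>i\<in>L. y i = 0 \<longrightarrow> g i = 0"
    and gint: "\<forall>i\<in>L. p1 \<noteq> Some i \<longrightarrow> p2 \<noteq> Some i \<longrightarrow> g i = 0 \<or> g i = 1"
    and gp1: "\<forall>a. p1 = Some a \<longrightarrow> a \<in> L \<and> 0 < g a \<and> g a < 1"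
    and gp2: "\<forall>a. p2 = Some a \<longrightarrow> a \<in> L \<and> 0 < g a \<and> g a < 1"
    and dis: "\<forall>a b. p1 = Some a \<longrightarrow> p2 = Some b \<longrightarrow> a \<noteq> b"
    and gs: "sum g L = sum y L"
    and z: "(f, p) \<in> set_pmf (dr_step g p1 p2)"
  shows "goodL y L f p"
proof (cases p1)
  case None
  show ?thesis
  proof (cases p2)
    case None
    with \<open>p1 = None\<close> z show ?thesis using g01 gy gint gs by (auto simp: goodL_def)
  next
    case (Some b)
    with \<open>p1 = None\<close> z show ?thesis using g01 gy gint gs gp2 by (auto simp: goodL_def)
  qed
next
  case (Some a)
  note a = this
  show ?thesis
  proof (cases p2)
    case None
    with a z show ?thesis using g01 gy gint gs gp1 by (auto simp: goodL_def)
  next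
    case (Some b)
    have aL: "a \<in> L" "0 < g a" "g a < 1" using gp1 a by auto
    have bL: "b \<in> L" "0 < g b" "g b < 1" using gp2 Some by auto
    have ab: "a \<noteq> b" using dis a Some by auto
    have gint': "\<forall>i\<in>L. i \<noteq> a \<longrightarrow> i \<noteq> b \<longrightarrow> g i = 0 \<or> g i = 1"
      using gint a Some by auto
    note U = good_upd[OF fin aL(1) bL(1) ab g01 gy gint' aL(2) bL(2) gs]
    from set_pmf_dr_step_SS[of "(f,p)" g a b] z a Some
    consider "g a + g b \<le> 1" "f = g(a := g a + g b, b := 0)" "p = promote a (g a + g b)"
      | "g a + g b \<le> 1" "f = g(a := 0, b := g a + g b)" "p = promote b (g a + g b)"
      | "g a + g b > 1" "f = g(a := 1, b := g a + g b - 1)" "p = promote b (g a + g b - 1)"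
      | "g a + g b > 1" "f = g(a := g a + g b - 1, b := 1)" "p = promote a (g a + g b - 1)"
      by auto
    then show ?thesis
    proof cases
      case 1
      then show ?thesis using U[of "g a + g b" 0 p] aL bL by auto
    next
      case 2
      then show ?thesis using U[of 0 "g a + g b" p] aL bL by auto
    next
      case 3
      then show ?thesis using U[of 1 "g a + g b - 1" p] aL bL by auto
    next
      case 4
      then show ?thesis using U[of "g a + g b - 1" 1 p] aL bL by auto
    qed
  qed
qed

lemma good_dr:
  assumes "distinct (leaves T)" "\<forall>i\<in>set (leaves T). 0 \<le> y i \<and> y i \<le> 1"
    and "(f, p) \<in> set_pmf (dr y T)"
  shows "goodL y (set (leaves T)) f p"
  using assms
proof (induction T arbitrary: f p)
  case (Leaf i)
  then show ?case by (auto simp: goodL_def promote_def)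
next
  case (Node l r)
  from Node.prems(3) obtain z1 z2 where
    z1': "z1 \<in> set_pmf (dr y l)" and z2': "z2 \<in> set_pmf (dr y r)" and
    z': "(f, p) \<in> set_pmf (dr_step (\<lambda>i. if i \<in> set (leaves l) then fst z1 i else fst z2 i) (snd z1) (snd z2))"
    by (auto simp: case_prod_unfold)
  obtain f1 p1 where e1: "z1 = (f1, p1)" by (cases z1)
  obtain f2 p2 where e2: "z2 = (f2, p2)" by (cases z2)
  have z1: "(f1, p1) \<in> set_pmf (dr y l)" and z2: "(f2, p2) \<in> set_pmf (dr y r)" and
    z: "(f, p) \<in> set_pmf (dr_step (\<lambda>i. if i \<in> set (leaves l) then f1 i else f2 i) p1 p2)"
    using z1' z2' z' unfolding e1 e2 fst_conv snd_conv by simp_all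
  have dl: "distinct (leaves l)" "distinct (leaves r)"
    and dj: "set (leaves l) \<inter> set (leaves r) = {}" using Node.prems(1) by auto
  have g1: "goodL y (set (leaves l)) f1 p1"
    using Node.IH(1)[OF dl(1) _ z1] Node.prems(2) by auto
  have g2: "goodL y (set (leaves r)) f2 p2"
    using Node.IH(2)[OF dl(2) _ z2] Node.prems(2) by auto
  define g where "g = (\<lambda>i. if i \<in> set (leaves l) then f1 i else f2 i)"
  have s: "sum g (set (leaves l) \<union> set (leaves r)) = sum y (set (leaves l) \<union> set (leaves r))"
  proof -
    have "sum g (set (leaves l) \<union> set (leaves r)) = sum g (set (leaves l)) + sum g (set (leaves r))"
      using dj by (simp add: sum.union_disjoint)
    also have "sum g (set (leaves l)) = sum f1 (set (leaves l))" by (simp add: g_def)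
    also have "sum g (set (leaves r)) = sum f2 (set (leaves r))"
      using dj by (auto simp: g_def intro!: sum.cong)
    finally show ?thesis using g1 g2 dj by (simp add: goodL_def sum.union_disjoint)
  qed
  have G1: "\<forall>i\<in>set (leaves l). 0 \<le> f1 i \<and> f1 i \<le> 1" "\<forall>i\<in>set (leaves l). y i = 0 \<longrightarrow> f1 i = 0"
     "\<forall>i\<in>set (leaves l). p1 \<noteq> Some i \<longrightarrow> f1 i = 0 \<or> f1 i = 1"
     "\<forall>a. p1 = Some a \<longrightarrow> a \<in> set (leaves l) \<and> 0 < f1 a \<and> f1 a < 1"
    using g1 unfolding goodL_def by blast+
  have G2: "\<forall>i\<in>set (leaves r). 0 \<le> f2 i \<and> f2 i \<le> 1" "\<forall>i\<in>set (leaves r). y i = 0 \<longrightarrow> f2 i = 0"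
     "\<forall>i\<in>set (leaves r). p2 \<noteq> Some i \<longrightarrow> f2 i = 0 \<or> f2 i = 1"
     "\<forall>a. p2 = Some a \<longrightarrow> a \<in> set (leaves r) \<and> 0 < f2 a \<and> f2 a < 1"
    using g2 unfolding goodL_def by blast+
  have gr: "\<And>i. i \<in> set (leaves r) \<Longrightarrow> g i = f2 i" using dj unfolding g_def by auto
  have gl: "\<And>i. i \<in> set (leaves l) \<Longrightarrow> g i = f1 i" unfolding g_def by auto
  have "goodL y (set (leaves l) \<union> set (leaves r)) f p"
  proof (rule good_step[where g=g and ?p1.0=p1 and ?p2.0=p2])
    show "finite (set (leaves l) \<union> set (leaves r))" by simp
    show "\<forall>i\<in>set (leaves l) \<union> set (leaves r). 0 \<le> g i \<and> g i \<le> 1"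
      using G1(1) G2(1) gl gr by auto
    show "\<forall>i\<in>set (leaves l) \<union> set (leaves r). y i = 0 \<longrightarrow> g i = 0"
      using G1(2) G2(2) gl gr by auto
    show "\<forall>i\<in>set (leaves l) \<union> set (leaves r). p1 \<noteq> Some i \<longrightarrow> p2 \<noteq> Some i \<longrightarrow> g i = 0 \<or> g i = 1"
      using G1(3) G2(3) gl gr by auto
    show "\<forall>a. p1 = Some a \<longrightarrow> a \<in> set (leaves l) \<union> set (leaves r) \<and> 0 < g a \<and> g a < 1"
      using G1(4) gl by auto
    show "\<forall>a. p2 = Some a \<longrightarrow> a \<in> set (leaves l) \<union> set (leaves r) \<and> 0 < g a \<and> g a < 1"
      using G2(4) gr by auto
    show "\<forall>a b. p1 = Some a \<longrightarrow> p2 = Some b \<longrightarrow> a \<noteq> b"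
      using G1(4) G2(4) dj by auto
    show "sum g (set (leaves l) \<union> set (leaves r)) = sum y (set (leaves l) \<union> set (leaves r))" by (rule s)
    show "(f, p) \<in> set_pmf (dr_step g p1 p2)" using z unfolding g_def .
  qed
  then show ?case by simp
qed

definition wv :: "bool \<Rightarrow> bool \<Rightarrow> real \<Rightarrow> real \<Rightarrow> real" where
  "wv be u c x = (if be then x else 1) * (if u then 1 - c * x else 1)"

lemma two_point_left:
  fixes q A1 B1 A2 B2 xa xb c \<kappa> :: real
  assumes q: "0 \<le> q" "q \<le> 1"
    and k1: "A1 * B1 = \<kappa>" and k2: "A2 * B2 = \<kappa>"
    and s1: "A1 + B1 = xa + xb" and s2: "A2 + B2 = xa + xb"
    and ea: "q * A1 + (1 - q) * A2 = xa" and eb: "q * B1 + (1 - q) * B2 = xb"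
    and kap: "\<kappa> \<le> xa * xb" and sq: "xa^2 \<le> q * A1^2 + (1 - q) * A2^2"
    and c: "0 \<le> c" and xa: "0 \<le> xa"
    and leg: "ba \<longrightarrow> ua" and nb: "\<not> bb"
  shows "q * (wv ba ua c A1 * wv bb ub c B1) + (1 - q) * (wv ba ua c A2 * wv bb ub c B2)
         \<le> wv ba ua c xa * wv bb ub c xb"
proof -
  have e1: "q * (1 - c * A1) + (1 - q) * (1 - c * A2) = 1 - c * (q * A1 + (1 - q) * A2)"
    by (simp add: algebra_simps)
  have E1: "q * (1 - c * A1) + (1 - q) * (1 - c * A2) = 1 - c * xa" using e1 ea by simp
  have e2: "q * (1 - c * B1) + (1 - q) * (1 - c * B2) = 1 - c * (q * B1 + (1 - q) * B2)"
    by (simp add: algebra_simps)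
  have E2: "q * (1 - c * B1) + (1 - q) * (1 - c * B2) = 1 - c * xb" using e2 eb by simp
  have p1: "(1 - c * A1) * (1 - c * B1) = 1 - c * (A1 + B1) + c^2 * (A1 * B1)"
    by (simp add: algebra_simps power2_eq_square)
  have P1: "(1 - c * A1) * (1 - c * B1) = 1 - c * (xa + xb) + c^2 * \<kappa>"
    using p1 s1 k1 by simp
  have p2: "(1 - c * A2) * (1 - c * B2) = 1 - c * (A2 + B2) + c^2 * (A2 * B2)"
    by (simp add: algebra_simps power2_eq_square)
  have P2: "(1 - c * A2) * (1 - c * B2) = 1 - c * (xa + xb) + c^2 * \<kappa>"
    using p2 s2 k2 by simp
  have R: "(1 - c * xa) * (1 - c * xb) = 1 - c * (xa + xb) + c^2 * (xa * xb)"
    by (simp add: algebra_simps power2_eq_square)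
  have c2: "0 \<le> c^2" by simp
  show ?thesis
  proof (cases ba)
    case False
    then show ?thesis
    proof (cases ua; cases ub)
      assume "ua" "ub"
      have "q * ((1 - c * A1) * (1 - c * B1)) + (1 - q) * ((1 - c * A2) * (1 - c * B2))
            = 1 - c * (xa + xb) + c^2 * \<kappa>" unfolding P1 P2 by (simp add: algebra_simps)
      also have "\<dots> \<le> (1 - c * xa) * (1 - c * xb)" using R kap c2 mult_left_mono[OF kap c2] by linarith
      finally show ?thesis using False nb \<open>ua\<close> \<open>ub\<close> by (simp add: wv_def)
    next
      assume "ua" "\<not> ub"
      then show ?thesis using False nb E1 by (simp add: wv_def)
    next
      assume "\<not> ua" "ub"
      then show ?thesis using False nb E2 by (simp add: wv_def)
    next
      assume "\<not> ua" "\<not> ub"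
      then show ?thesis using False nb by (simp add: wv_def algebra_simps)
    qed
  next
    case True
    then have "ua" using leg by simp
    show ?thesis
    proof (cases ub)
      case True
      have "q * (A1 * (1 - c * A1) * (1 - c * B1)) + (1 - q) * (A2 * (1 - c * A2) * (1 - c * B2))
          = (q * A1 + (1 - q) * A2) * (1 - c * (xa + xb)) + c^2 * \<kappa> * (q * A1 + (1 - q) * A2)"
      proof -
        have a1: "A1 * (1 - c * A1) * (1 - c * B1) = A1 * (1 - c * (xa + xb) + c^2 * \<kappa>)"
          using P1 by (simp add: mult.assoc)
        have a2: "A2 * (1 - c * A2) * (1 - c * B2) = A2 * (1 - c * (xa + xb) + c^2 * \<kappa>)"
          using P2 by (simp add: mult.assoc)
        show ?thesis unfolding a1 a2 by (simp add: algebra_simps)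
      qed
      also have "\<dots> = xa * (1 - c * (xa + xb)) + c^2 * \<kappa> * xa" using ea by simp
      also have "\<dots> \<le> xa * (1 - c * (xa + xb)) + c^2 * (xa * xb) * xa"
        using mult_right_mono[OF mult_left_mono[OF kap c2] xa] by linarith
      also have "\<dots> = xa * ((1 - c * xa) * (1 - c * xb))" by (simp add: algebra_simps power2_eq_square)
      finally show ?thesis using \<open>ba\<close> \<open>ua\<close> True nb by (simp add: wv_def mult.assoc)
    next
      case False
      have "q * (A1 * (1 - c * A1)) + (1 - q) * (A2 * (1 - c * A2))
          = (q * A1 + (1 - q) * A2) - c * (q * A1^2 + (1 - q) * A2^2)"
        by (simp add: algebra_simps power2_eq_square)
      also have "\<dots> \<le> xa - c * xa^2" using ea mult_left_mono[OF sq c] by linarith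
      also have "\<dots> = xa * (1 - c * xa)" by (simp add: algebra_simps power2_eq_square)
      finally show ?thesis using \<open>ba\<close> \<open>ua\<close> False nb by (simp add: wv_def)
    qed
  qed
qed

lemma two_point:
  fixes q A1 B1 A2 B2 xa xb c \<kappa> :: real
  assumes q: "0 \<le> q" "q \<le> 1"
    and k1: "A1 * B1 = \<kappa>" and k2: "A2 * B2 = \<kappa>"
    and s1: "A1 + B1 = xa + xb" and s2: "A2 + B2 = xa + xb"
    and ea: "q * A1 + (1 - q) * A2 = xa" and eb: "q * B1 + (1 - q) * B2 = xb"
    and kap: "\<kappa> \<le> xa * xb" and sqa: "xa^2 \<le> q * A1^2 + (1 - q) * A2^2"
    and sqb: "xb^2 \<le> q * B1^2 + (1 - q) * B2^2"
    and c: "0 \<le> c" and xa: "0 \<le> xa" and xb: "0 \<le> xb"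
    and lega: "ba \<longrightarrow> ua" and legb: "bb \<longrightarrow> ub" and nb: "\<not> (ba \<and> bb)"
  shows "q * (wv ba ua c A1 * wv bb ub c B1) + (1 - q) * (wv ba ua c A2 * wv bb ub c B2)
         \<le> wv ba ua c xa * wv bb ub c xb"
proof (cases bb)
  case False
  then show ?thesis using two_point_left[OF q k1 k2 s1 s2 ea eb kap sqa c xa lega] by simp
next
  case True
  then have "\<not> ba" using nb by simp
  have k1': "B1 * A1 = \<kappa>" and k2': "B2 * A2 = \<kappa>" using k1 k2 by (simp_all add: mult.commute)
  have s1': "B1 + A1 = xb + xa" and s2': "B2 + A2 = xb + xa" using s1 s2 by simp_all
  have kap': "\<kappa> \<le> xb * xa" using kap by (simp add: mult.commute)
  from two_point_left[OF q k1' k2' s1' s2' eb ea kap' sqb c xb legb \<open>\<not> ba\<close>, of ua]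
  show ?thesis by (simp add: mult.commute)
qed

lemma step_real_le1:
  fixes xa xb :: real
  assumes "0 < xa" "0 < xb" "xa + xb \<le> 1" "0 \<le> c"
    and "ba \<longrightarrow> ua" "bb \<longrightarrow> ub" "\<not> (ba \<and> bb)"
  shows "(xa / (xa + xb)) * (wv ba ua c (xa + xb) * wv bb ub c 0)
       + (1 - xa / (xa + xb)) * (wv ba ua c 0 * wv bb ub c (xa + xb))
       \<le> wv ba ua c xa * wv bb ub c xb"
proof -
  let ?s = "xa + xb" let ?q = "xa / ?s"
  have s: "?s > 0" using assms by simp
  have q: "0 \<le> ?q" "?q \<le> 1" using assms by auto
  have ea: "?q * ?s + (1 - ?q) * 0 = xa" using s by simp
  have eb: "?q * 0 + (1 - ?q) * ?s = xb" using s by (simp add: field_simps)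
  have sqa: "xa^2 \<le> ?q * ?s^2 + (1 - ?q) * 0^2" using s assms by (simp add: power2_eq_square field_simps)
  have sqb: "xb^2 \<le> ?q * 0^2 + (1 - ?q) * ?s^2" using s assms
    by (simp add: power2_eq_square field_simps)
  show ?thesis
    using two_point[OF q, of ?s 0 0 0 ?s xa xb, OF _ _ _ _ ea eb _ sqa sqb] assms by simp
qed

lemma step_real_gt1:
  fixes xa xb :: real
  assumes "0 < xa" "0 < xb" "xa < 1" "xb < 1" "xa + xb > 1" "0 \<le> c"
    and "ba \<longrightarrow> ua" "bb \<longrightarrow> ub" "\<not> (ba \<and> bb)"
  shows "((1 - xb) / (2 - (xa + xb))) * (wv ba ua c 1 * wv bb ub c (xa + xb - 1))
       + (1 - (1 - xb) / (2 - (xa + xb))) * (wv ba ua c (xa + xb - 1) * wv bb ub c 1)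
       \<le> wv ba ua c xa * wv bb ub c xb"
proof -
  let ?s = "xa + xb" let ?q = "(1 - xb) / (2 - ?s)" let ?u = "?s - 1"
  have d: "2 - ?s > 0" using assms by simp
  have q1: "0 \<le> ?q" using assms d by simp
  have "1 - xb \<le> 1 * (2 - ?s)" using assms by simp
  then have q2: "?q \<le> 1" using d by (simp only: divide_le_eq) simp
  note q = q1 q2
  have qd: "?q * (2 - ?s) = 1 - xb" using d by simp
  have e1: "\<And>q::real. q * 1 + (1 - q) * ?u = ?u + q * (2 - ?s)" by (simp add: algebra_simps)
  have ea: "?q * 1 + (1 - ?q) * ?u = xa" using e1[of ?q] qd by simp
  have e2: "\<And>q::real. q * ?u + (1 - q) * 1 = 1 - q * (2 - ?s)" by (simp add: algebra_simps)
  have eb: "?q * ?u + (1 - ?q) * 1 = xb" using e2[of ?q] qd by simp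
  have k: "1 * ?u = ?u" "?u * 1 = ?u" by simp_all
  have kap: "?u \<le> xa * xb"
  proof -
    have "0 \<le> (1 - xa) * (1 - xb)" using assms by simp
    then show ?thesis by (simp add: algebra_simps)
  qed
  have var: "\<And>p a b :: real. 0 \<le> p \<Longrightarrow> p \<le> 1 \<Longrightarrow> (p * a + (1 - p) * b)^2 \<le> p * a^2 + (1 - p) * b^2"
  proof -
    fix p a b :: real assume "0 \<le> p" "p \<le> 1"
    then have "0 \<le> p * (1 - p) * (a - b)^2" by simp
    moreover have "p * a^2 + (1 - p) * b^2 - (p * a + (1 - p) * b)^2 = p * (1 - p) * (a - b)^2"
      by (simp add: power2_eq_square algebra_simps)
    ultimately show "(p * a + (1 - p) * b)^2 \<le> p * a^2 + (1 - p) * b^2" by linarith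
  qed
  have sqa: "xa^2 \<le> ?q * 1^2 + (1 - ?q) * ?u^2" using var[OF q, of 1 ?u] ea by simp
  have sqb: "xb^2 \<le> ?q * ?u^2 + (1 - ?q) * 1^2" using var[OF q, of ?u 1] eb by simp
  show ?thesis
    using two_point[OF q k(1) k(2) _ _ ea eb kap sqa sqb] assms by simp
qed

definition phi :: "bool \<Rightarrow> nat \<Rightarrow> nat set \<Rightarrow> real \<Rightarrow> nat set \<Rightarrow> (nat \<Rightarrow> real) \<Rightarrow> real" where
  "phi be P U c L f = (\<Prod>i\<in>L. wv (be \<and> i = P) (i \<in> U) c (f i))"

lemma wv_nonneg: "0 \<le> x \<Longrightarrow> x \<le> 1 \<Longrightarrow> 0 \<le> c \<Longrightarrow> c \<le> 1 \<Longrightarrow> 0 \<le> wv b u c x"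
proof -
  assume "0 \<le> x" "x \<le> 1" "0 \<le> c" "c \<le> 1"
  then have "c * x \<le> 1" using mult_mono[of c 1 x 1] by simp
  then show ?thesis using \<open>0 \<le> x\<close> by (simp add: wv_def)
qed

lemma phi_nonneg: "\<forall>i\<in>L. 0 \<le> f i \<and> f i \<le> 1 \<Longrightarrow> 0 \<le> c \<Longrightarrow> c \<le> 1 \<Longrightarrow> 0 \<le> phi be P U c L f"
  unfolding phi_def by (intro prod_nonneg) (auto intro: wv_nonneg)

lemma prod_two:
  fixes h :: "'a \<Rightarrow> real"
  assumes "finite L" "a \<in> L" "b \<in> L" "a \<noteq> b"
  shows "prod h L = h a * h b * prod h (L - {a, b})"
proof -
  have "prod h L = h a * prod h (L - {a})" using assms by (simp add: prod.remove)
  also have "prod h (L - {a}) = h b * prod h (L - {a} - {b})" using assms by (simp add: prod.remove)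
  also have "L - {a} - {b} = L - {a, b}" by auto
  finally show ?thesis by (simp add: mult.assoc)
qed

lemma phi_upd:
  assumes "finite L" "a \<in> L" "b \<in> L" "a \<noteq> b"
  shows "phi be P U c L (g(a := u, b := v)) =
           wv (be \<and> a = P) (a \<in> U) c u * wv (be \<and> b = P) (b \<in> U) c v * phi be P U c (L - {a, b}) g"
proof -
  have cg: "phi be P U c (L - {a, b}) (g(a := u, b := v)) = phi be P U c (L - {a, b}) g"
    unfolding phi_def by (rule prod.cong) auto
  show ?thesis unfolding phi_def
    using prod_two[OF assms, of "\<lambda>i. wv (be \<and> i = P) (i \<in> U) c ((g(a := u, b := v)) i)"] cg assms
    unfolding phi_def by simp
qed

lemma phi_split:
  assumes "finite L" "a \<in> L" "b \<in> L" "a \<noteq> b"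
  shows "phi be P U c L g =
           wv (be \<and> a = P) (a \<in> U) c (g a) * wv (be \<and> b = P) (b \<in> U) c (g b) * phi be P U c (L - {a, b}) g"
  using phi_upd[OF assms, of be P U c g "g a" "g b"] by simp

lemma ennreal_comb:
  fixes A B q :: real
  assumes "0 \<le> A" "0 \<le> B" "0 \<le> q" "q \<le> 1"
  shows "ennreal A * ennreal q + ennreal B * ennreal (1 - q) = ennreal (A * q + B * (1 - q))"
proof -
  have "ennreal (A * q + B * (1 - q)) = ennreal (A * q) + ennreal (B * (1 - q))"
    using assms by (intro ennreal_plus) auto
  then show ?thesis using assms by (simp add: ennreal_mult'')
qed

lemma step_SS:
  assumes fin: "finite L" and aL: "a \<in> L" and bL: "b \<in> L" and ab: "a \<noteq> b"
    and ga: "0 < g a" "g a < 1" and gb: "0 < g b" "g b < 1"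
    and g01: "\<forall>i\<in>L. 0 \<le> g i \<and> g i \<le> 1" and c: "0 \<le> c" "c \<le> 1" and leg: "be \<longrightarrow> P \<in> U"
  shows "(\<integral>\<^sup>+z. ennreal (phi be P U c L (fst z)) \<partial>(dr_step g (Some a) (Some b)))
          \<le> ennreal (phi be P U c L g)"
proof -
  let ?R = "phi be P U c (L - {a, b}) g"
  let ?Wa = "wv (be \<and> a = P) (a \<in> U) c" and ?Wb = "wv (be \<and> b = P) (b \<in> U) c"
  have R: "0 \<le> ?R" using g01 c by (intro phi_nonneg) auto
  have lega: "(be \<and> a = P) \<longrightarrow> a \<in> U" and legb: "(be \<and> b = P) \<longrightarrow> b \<in> U" using leg by auto
  have nb: "\<not> ((be \<and> a = P) \<and> (be \<and> b = P))" using ab by auto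
  note U = phi_upd[OF fin aL bL ab, of be P U c g]
  note S = phi_split[OF fin aL bL ab, of be P U c g]
  let ?s = "g a + g b"
  show ?thesis
  proof (cases "?s \<le> 1")
    case True
    let ?q = "g a / ?s"
    have q: "0 \<le> ?q" "?q \<le> 1" using ga gb by auto
    have W1: "0 \<le> ?Wa ?s * ?Wb 0" using True ga gb c by (intro mult_nonneg_nonneg wv_nonneg) auto
    have W2: "0 \<le> ?Wa 0 * ?Wb ?s" using True ga gb c by (intro mult_nonneg_nonneg wv_nonneg) auto
    have "(\<integral>\<^sup>+z. ennreal (phi be P U c L (fst z)) \<partial>(dr_step g (Some a) (Some b)))
        = ennreal (?Wa ?s * ?Wb 0 * ?R) * ennreal ?q + ennreal (?Wa 0 * ?Wb ?s * ?R) * ennreal (1 - ?q)"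
      using True q by (simp add: Let_def U)
    also have "\<dots> = ennreal (?q * (?Wa ?s * ?Wb 0) * ?R + (1 - ?q) * (?Wa 0 * ?Wb ?s) * ?R)"
      using ennreal_comb[OF mult_nonneg_nonneg[OF W1 R] mult_nonneg_nonneg[OF W2 R] q] by (simp add: mult_ac)
    also have "\<dots> \<le> ennreal (?Wa (g a) * ?Wb (g b) * ?R)"
    proof (rule ennreal_leI)
      have "?q * (?Wa ?s * ?Wb 0) + (1 - ?q) * (?Wa 0 * ?Wb ?s) \<le> ?Wa (g a) * ?Wb (g b)"
        using step_real_le1[OF ga(1) gb(1) True c(1) lega legb nb] .
      from mult_right_mono[OF this R]
      show "?q * (?Wa ?s * ?Wb 0) * ?R + (1 - ?q) * (?Wa 0 * ?Wb ?s) * ?R \<le> ?Wa (g a) * ?Wb (g b) * ?R"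
        by (simp add: algebra_simps)
    qed
    finally show ?thesis using S by simp
  next
    case False
    let ?q = "(1 - g b) / (2 - ?s)"
    have d: "2 - ?s > 0" using ga gb by simp
    have q1: "0 \<le> ?q" using gb d by simp
    have "1 - g b \<le> 1 * (2 - ?s)" using ga by simp
    then have q2: "?q \<le> 1" using d by (simp only: divide_le_eq) simp
    note q = q1 q2
    have W1: "0 \<le> ?Wa 1 * ?Wb (?s - 1)" using False ga gb c by (intro mult_nonneg_nonneg wv_nonneg) auto
    have W2: "0 \<le> ?Wa (?s - 1) * ?Wb 1" using False ga gb c by (intro mult_nonneg_nonneg wv_nonneg) auto
    have "(\<integral>\<^sup>+z. ennreal (phi be P U c L (fst z)) \<partial>(dr_step g (Some a) (Some b)))
        = ennreal (?Wa 1 * ?Wb (?s - 1) * ?R) * ennreal ?q + ennreal (?Wa (?s - 1) * ?Wb 1 * ?R) * ennreal (1 - ?q)"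
      using False q by (simp add: Let_def U)
    also have "\<dots> = ennreal (?q * (?Wa 1 * ?Wb (?s - 1)) * ?R + (1 - ?q) * (?Wa (?s - 1) * ?Wb 1) * ?R)"
      using ennreal_comb[OF mult_nonneg_nonneg[OF W1 R] mult_nonneg_nonneg[OF W2 R] q] by (simp add: mult_ac)
    also have "\<dots> \<le> ennreal (?Wa (g a) * ?Wb (g b) * ?R)"
    proof (rule ennreal_leI)
      have "?q * (?Wa 1 * ?Wb (?s - 1)) + (1 - ?q) * (?Wa (?s - 1) * ?Wb 1) \<le> ?Wa (g a) * ?Wb (g b)"
        using step_real_gt1[OF ga(1) gb(1) ga(2) gb(2) _ c(1) lega legb nb] False by simp
      from mult_right_mono[OF this R]
      show "?q * (?Wa 1 * ?Wb (?s - 1)) * ?R + (1 - ?q) * (?Wa (?s - 1) * ?Wb 1) * ?R \<le> ?Wa (g a) * ?Wb (g b) * ?R"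
        by (simp add: algebra_simps)
    qed
    finally show ?thesis using S by simp
  qed
qed

lemma step_any:
  assumes fin: "finite L"
    and p1: "\<And>a. p1 = Some a \<Longrightarrow> a \<in> L \<and> 0 < g a \<and> g a < 1"
    and p2: "\<And>b. p2 = Some b \<Longrightarrow> b \<in> L \<and> 0 < g b \<and> g b < 1"
    and dis: "\<And>a b. p1 = Some a \<Longrightarrow> p2 = Some b \<Longrightarrow> a \<noteq> b"
    and g01: "\<forall>i\<in>L. 0 \<le> g i \<and> g i \<le> 1" and c: "0 \<le> c" "c \<le> 1" and leg: "be \<longrightarrow> P \<in> U"
  shows "(\<integral>\<^sup>+z. ennreal (phi be P U c L (fst z)) \<partial>(dr_step g p1 p2))
          \<le> ennreal (phi be P U c L g)"
proof (cases p1)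
  case None
  then show ?thesis by (cases p2) simp_all
next
  case (Some a)
  show ?thesis
  proof (cases p2)
    case None
    then show ?thesis using Some by simp
  next
    case (Some b)
    have a: "a \<in> L" "0 < g a" "g a < 1" using p1 \<open>p1 = Some a\<close> by auto
    have b: "b \<in> L" "0 < g b" "g b < 1" using p2 Some by auto
    have ab: "a \<noteq> b" using dis \<open>p1 = Some a\<close> Some by auto
    show ?thesis using step_SS[OF fin a(1) b(1) ab a(2,3) b(2,3) g01 c leg] \<open>p1 = Some a\<close> Some
      by simp
  qed
qed

lemma pot:
  assumes "distinct (leaves T)" "\<forall>i\<in>set (leaves T). 0 \<le> y i \<and> y i \<le> 1"
    and c: "0 \<le> c" "c \<le> 1" and leg: "be \<longrightarrow> P \<in> U"
  shows "(\<integral>\<^sup>+z. ennreal (phi be P U c (set (leaves T)) (fst z)) \<partial>(dr y T))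
          \<le> ennreal (phi be P U c (set (leaves T)) y)"
  using assms(1,2)
proof (induction T)
  case (Leaf i)
  then show ?case by (simp add: phi_def)
next
  case (Node l r)
  let ?A = "set (leaves l)" and ?B = "set (leaves r)"
  let ?ph = "phi be P U c"
  have dl: "distinct (leaves l)" "distinct (leaves r)"
    and dj: "?A \<inter> ?B = {}" using Node.prems(1) by auto
  have yl: "\<forall>i\<in>?A. 0 \<le> y i \<and> y i \<le> 1" and yr: "\<forall>i\<in>?B. 0 \<le> y i \<and> y i \<le> 1"
    using Node.prems(2) by auto
  define G where "G = (\<lambda>f1 f2 i. if i \<in> ?A then f1 i else (f2 i :: real))"
  have good1: "\<And>f1 p1. (f1, p1) \<in> set_pmf (dr y l) \<Longrightarrow> goodL y ?A f1 p1"
    using good_dr[OF dl(1) yl] by blast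
  have good2: "\<And>f2 p2. (f2, p2) \<in> set_pmf (dr y r) \<Longrightarrow> goodL y ?B f2 p2"
    using good_dr[OF dl(2) yr] by blast
  have split: "?ph (?A \<union> ?B) (G f1 f2) = ?ph ?A f1 * ?ph ?B f2" for f1 f2
  proof -
    have "?ph (?A \<union> ?B) (G f1 f2) = ?ph ?A (G f1 f2) * ?ph ?B (G f1 f2)"
      unfolding phi_def using dj by (simp add: prod.union_disjoint)
    also have "?ph ?A (G f1 f2) = ?ph ?A f1" unfolding phi_def G_def by (rule prod.cong) auto
    also have "?ph ?B (G f1 f2) = ?ph ?B f2" unfolding phi_def G_def using dj by (intro prod.cong) auto
    finally show ?thesis .
  qed
  have inner: "(\<integral>\<^sup>+z. ennreal (?ph (?A \<union> ?B) (fst z)) \<partial>(dr_step (G f1 f2) p1 p2))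
      \<le> ennreal (?ph ?A f1) * ennreal (?ph ?B f2)"
    if z1: "(f1, p1) \<in> set_pmf (dr y l)" and z2: "(f2, p2) \<in> set_pmf (dr y r)" for f1 p1 f2 p2
  proof -
    have g1: "goodL y ?A f1 p1" and g2: "goodL y ?B f2 p2" using good1[OF z1] good2[OF z2] .
    have n1: "0 \<le> ?ph ?A f1" using g1 c by (intro phi_nonneg) (auto simp: goodL_def)
    have n2: "0 \<le> ?ph ?B f2" using g2 c by (intro phi_nonneg) (auto simp: goodL_def)
    have "(\<integral>\<^sup>+z. ennreal (?ph (?A \<union> ?B) (fst z)) \<partial>(dr_step (G f1 f2) p1 p2))
        \<le> ennreal (?ph (?A \<union> ?B) (G f1 f2))"
    proof (rule step_any)
      show "finite (?A \<union> ?B)" by simp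
      show "\<And>a. p1 = Some a \<Longrightarrow> a \<in> ?A \<union> ?B \<and> 0 < G f1 f2 a \<and> G f1 f2 a < 1"
        using g1 by (auto simp: goodL_def G_def)
      show "\<And>b. p2 = Some b \<Longrightarrow> b \<in> ?A \<union> ?B \<and> 0 < G f1 f2 b \<and> G f1 f2 b < 1"
        using g2 dj by (auto simp: goodL_def G_def)
      show "\<And>a b. p1 = Some a \<Longrightarrow> p2 = Some b \<Longrightarrow> a \<noteq> b"
        using g1 g2 dj by (auto simp: goodL_def)
      show "\<forall>i\<in>?A \<union> ?B. 0 \<le> G f1 f2 i \<and> G f1 f2 i \<le> 1"
        using g1 g2 by (auto simp: goodL_def G_def)
    qed (use c leg in auto)
    also have "\<dots> = ennreal (?ph ?A f1) * ennreal (?ph ?B f2)"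
      using split n1 by (simp add: ennreal_mult')
    finally show ?thesis .
  qed
  have "(\<integral>\<^sup>+z. ennreal (?ph (set (leaves (Node l r))) (fst z)) \<partial>(dr y (Node l r)))
      = (\<integral>\<^sup>+z1. \<integral>\<^sup>+z2. (\<integral>\<^sup>+z. ennreal (?ph (?A \<union> ?B) (fst z))
            \<partial>(dr_step (G (fst z1) (fst z2)) (snd z1) (snd z2))) \<partial>(dr y r) \<partial>(dr y l))"
    by (simp add: split_beta G_def)
  also have "\<dots> \<le> (\<integral>\<^sup>+z1. \<integral>\<^sup>+z2. ennreal (?ph ?A (fst z1)) * ennreal (?ph ?B (fst z2)) \<partial>(dr y r) \<partial>(dr y l))"
    apply (rule nn_integral_mono_AE, rule AE_pmfI)
    apply (rule nn_integral_mono_AE, rule AE_pmfI)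
    subgoal for z1 z2 using inner[of "fst z1" "snd z1" "fst z2" "snd z2"] by simp
    done
  also have "\<dots> = (\<integral>\<^sup>+z1. ennreal (?ph ?A (fst z1)) * (\<integral>\<^sup>+z2. ennreal (?ph ?B (fst z2)) \<partial>(dr y r)) \<partial>(dr y l))"
    by (simp add: nn_integral_cmult)
  also have "\<dots> = (\<integral>\<^sup>+z1. ennreal (?ph ?A (fst z1)) \<partial>(dr y l)) * (\<integral>\<^sup>+z2. ennreal (?ph ?B (fst z2)) \<partial>(dr y r))"
    by (simp add: nn_integral_multc)
  also have "\<dots> \<le> ennreal (?ph ?A y) * ennreal (?ph ?B y)"
    using Node.IH(1)[OF dl(1) yl] Node.IH(2)[OF dl(2) yr] by (intro mult_mono) auto
  also have "\<dots> = ennreal (?ph (set (leaves (Node l r))) y)"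
  proof -
    have n1: "0 \<le> ?ph ?A y" using yl c by (intro phi_nonneg) auto
    have "?ph (?A \<union> ?B) y = ?ph ?A y * ?ph ?B y"
      unfolding phi_def using dj by (simp add: prod.union_disjoint)
    then show ?thesis using n1 by (simp add: ennreal_mult')
  qed
  finally show ?case .
qed

lemma sum_01:
  fixes f :: "nat \<Rightarrow> real"
  assumes "finite A" "\<forall>i\<in>A. f i = 0 \<or> f i = 1"
  shows "sum f A = real (card {i\<in>A. f i = 1})"
proof -
  have "sum f A = sum (\<lambda>i. if f i = 1 then 1 else 0) A"
    using assms(2) by (intro sum.cong) auto
  also have "\<dots> = real (card (A \<inter> {i. f i = 1}))"
    using assms(1) by (simp add: sum.If_cases)
  also have "A \<inter> {i. f i = 1} = {i\<in>A. f i = 1}" by auto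
  finally show ?thesis .
qed

lemma Y_support:
  assumes d: "distinct (leaves T)" and sl: "set (leaves T) = {1..m}"
    and y01: "\<forall>i\<in>{1..m}. 0 \<le> y i \<and> y i \<le> 1" and ys: "(\<Sum>i=1..m. y i) = real k"
    and Y: "Y \<in> set_pmf (Y_dist y T)"
  shows "\<forall>i\<in>{1..m}. (Y i = 0 \<or> Y i = 1) \<and> (y i = 0 \<longrightarrow> Y i = 0)"
proof -
  from Y obtain p where z: "(Y, p) \<in> set_pmf (dr y T)" by (auto simp: Y_dist_def)
  have g: "goodL y {1..m} Y p" using good_dr[OF d _ z] y01 sl by auto
  have "p = None"
  proof (rule ccontr)
    assume "p \<noteq> None"
    then obtain a where a: "p = Some a" by auto
    have aL: "a \<in> {1..m}" "0 < Y a" "Y a < 1" using g a by (auto simp: goodL_def)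
    have int: "\<forall>i\<in>{1..m} - {a}. Y i = 0 \<or> Y i = 1" using g a by (auto simp: goodL_def)
    have "sum Y {1..m} = Y a + sum Y ({1..m} - {a})" using aL by (simp add: sum.remove)
    also have "sum Y ({1..m} - {a}) = real (card {i\<in>{1..m} - {a}. Y i = 1})"
      using int by (intro sum_01) auto
    finally have "Y a = real k - real (card {i\<in>{1..m} - {a}. Y i = 1})"
      using g ys by (simp add: goodL_def)
    then have "Y a = of_int (int k - int (card {i\<in>{1..m} - {a}. Y i = 1}))" by simp
    then obtain zz :: int where "Y a = of_int zz" by blast
    show False
    proof (cases "zz \<le> 0")
      case True
      then have "real_of_int zz \<le> 0" by simp
      then show False using aL \<open>Y a = of_int zz\<close> by simp
    next
      case False
      then have "real_of_int zz \<ge> 1" by simp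
      then show False using aL \<open>Y a = of_int zz\<close> by simp
    qed
  qed
  then show ?thesis using g by (auto simp: goodL_def)
qed

lemma sm_Suc: "submax y \<sigma> \<epsilon> (Suc p) = submax y \<sigma> \<epsilon> p + y (\<sigma> (Suc p)) / \<epsilon>"
  by (simp add: submax_def)

lemma sm_0: "submax y \<sigma> \<epsilon> 0 = 0"
  by (simp add: submax_def)

lemma sm_nat:
  assumes "\<forall>q\<in>{1..m}. \<exists>n::nat. y (\<sigma> q) / \<epsilon> = real n" "p \<le> m"
  shows "\<exists>n::nat. submax y \<sigma> \<epsilon> p = real n"
  using assms(2)
proof (induction p)
  case 0
  then show ?case by (simp add: sm_0)
next
  case (Suc p)
  then obtain n where n: "submax y \<sigma> \<epsilon> p = real n" by auto
  have "Suc p \<in> {1..m}" using Suc.prems by simp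
  then obtain n' :: nat where n': "y (\<sigma> (Suc p)) / \<epsilon> = real n'" using assms(1) by blast
  show ?case using n n' by (intro exI[of _ "n + n'"]) (simp add: sm_Suc)
qed

lemma sm_mono:
  assumes "\<forall>q\<in>{1..m}. 0 \<le> y (\<sigma> q)" "0 < \<epsilon>" "p \<le> p'" "p' \<le> m"
  shows "submax y \<sigma> \<epsilon> p \<le> submax y \<sigma> \<epsilon> p'"
  using assms(3,4)
proof (induction p' rule: dec_induct)
  case base
  then show ?case by simp
next
  case (step n)
  have "0 \<le> y (\<sigma> (Suc n)) / \<epsilon>" using assms(1,2) step by auto
  then show ?case using step by (simp add: sm_Suc)
qed

lemma sb_bounds:
  "r \<in> sub_blk y \<sigma> \<epsilon> q \<longleftrightarrow> submax y \<sigma> \<epsilon> (q - 1) < real r \<and> real r \<le> submax y \<sigma> \<epsilon> q"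
  by (simp add: sub_blk_def)

lemma sb_order:
  assumes "\<forall>q\<in>{1..m}. 0 \<le> y (\<sigma> q)" "0 < \<epsilon>" "q < q'" "q' \<le> m"
    and "r1 \<in> sub_blk y \<sigma> \<epsilon> q" "r2 \<in> sub_blk y \<sigma> \<epsilon> q'"
  shows "r1 < r2"
proof -
  have "submax y \<sigma> \<epsilon> q \<le> submax y \<sigma> \<epsilon> (q' - 1)"
    using assms by (intro sm_mono[where m=m]) auto
  then have "real r1 < real r2" using assms(5,6) by (simp add: sb_bounds)
  then show ?thesis by simp
qed

lemma sb_finite:
  assumes "\<exists>n::nat. submax y \<sigma> \<epsilon> q = real n"
  shows "finite (sub_blk y \<sigma> \<epsilon> q)"
proof -
  obtain n :: nat where n: "submax y \<sigma> \<epsilon> q = real n" using assms by auto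
  have "sub_blk y \<sigma> \<epsilon> q \<subseteq> {..n}" using n by (auto simp: sb_bounds)
  then show ?thesis using finite_subset by blast
qed

lemma sb_nonempty:
  assumes "\<forall>q\<in>{1..m}. \<exists>n::nat. y (\<sigma> q) / \<epsilon> = real n" "q \<in> {1..m}" "0 < y (\<sigma> q)" "0 < \<epsilon>"
  shows "sub_blk y \<sigma> \<epsilon> q \<noteq> {}"
proof -
  obtain n :: nat where n: "submax y \<sigma> \<epsilon> q = real n" using sm_nat[where m=m and y=y and \<sigma>=\<sigma> and \<epsilon>=\<epsilon>, OF assms(1)] assms(2) by auto
  have q: "q = Suc (q - 1)" using assms(2) by simp
  have "submax y \<sigma> \<epsilon> q = submax y \<sigma> \<epsilon> (q - 1) + y (\<sigma> q) / \<epsilon>"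
    using sm_Suc[of y \<sigma> \<epsilon> "q - 1"] q by simp
  moreover have "0 < y (\<sigma> q) / \<epsilon>" using assms by simp
  ultimately have "n \<in> sub_blk y \<sigma> \<epsilon> q" using n by (simp add: sb_bounds)
  then show ?thesis by auto
qed

lemma inner_meas:
  fixes Q :: "nat \<Rightarrow> bool"
  assumes yint: "\<forall>q\<in>{1..m}. \<exists>n::nat. y (\<sigma> q) / \<epsilon> = real n"
    and ynn: "\<forall>q\<in>{1..m}. 0 \<le> y (\<sigma> q)" and eps: "0 < \<epsilon>"
    and P: "P \<in> {1..m}" and rP: "r \<in> sub_blk y \<sigma> \<epsilon> P"
    and Ys: "\<forall>q\<in>{1..m}. Y (\<sigma> q) = 1 \<longrightarrow> 0 < y (\<sigma> q)"
  shows "emeasure (measure_pmf (map_pmf (\<lambda>ch. ch ` {p\<in>{1..m}. Y (\<sigma> p) = 1})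
            (Pi_pmf {p\<in>{1..m}. Y (\<sigma> p) = 1} 0 (\<lambda>p. pmf_of_set (sub_blk y \<sigma> \<epsilon> p)))))
            {S. Q (card (S \<inter> {1..<r})) \<and> r \<in> S}
       = (if Y (\<sigma> P) = 1 \<and> Q (card {q\<in>{1..m}. Y (\<sigma> q) = 1 \<and> q < P})
          then emeasure (measure_pmf (pmf_of_set (sub_blk y \<sigma> \<epsilon> P))) {r} else 0)"
proof -
  define Op where "Op = {p\<in>{1..m}. Y (\<sigma> p) = 1}"
  define sb where "sb = sub_blk y \<sigma> \<epsilon>"
  define Pi where "Pi = Pi_pmf Op 0 (\<lambda>p. pmf_of_set (sb p))"
  define cond where "cond = (Y (\<sigma> P) = 1 \<and> Q (card {q\<in>{1..m}. Y (\<sigma> q) = 1 \<and> q < P}))"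
  have finO: "finite Op" by (simp add: Op_def)
  have blk: "finite (sb q) \<and> sb q \<noteq> {}" if "q \<in> Op" for q
  proof -
    have q: "q \<in> {1..m}" "0 < y (\<sigma> q)" using that Ys by (auto simp: Op_def)
    show ?thesis unfolding sb_def
      using sb_finite[OF sm_nat[where m=m and y=y and \<sigma>=\<sigma> and \<epsilon>=\<epsilon>, OF yint]] sb_nonempty[where m=m and y=y and \<sigma>=\<sigma> and \<epsilon>=\<epsilon>, OF yint q eps] q by auto
  qed
  have supp: "\<forall>q\<in>Op. ch q \<in> sb q" if "ch \<in> set_pmf Pi" for ch
  proof
    fix q assume q: "q \<in> Op"
    have sP: "set_pmf Pi = PiE_dflt Op 0 (set_pmf \<circ> (\<lambda>p. pmf_of_set (sb p)))"
      unfolding Pi_def by (rule set_Pi_pmf[OF finO])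
    have "ch \<in> PiE_dflt Op 0 (set_pmf \<circ> (\<lambda>p. pmf_of_set (sb p)))"
      using that unfolding sP .
    then have "ch q \<in> set_pmf (pmf_of_set (sb q))" using q by (auto simp: PiE_dflt_def)
    then show "ch q \<in> sb q" using blk[OF q] by simp
  qed
  have ord: "r1 < r2" if "q < q'" "q' \<in> {1..m}" "r1 \<in> sb q" "r2 \<in> sb q'" for q q' r1 r2
    using sb_order[where m=m and y=y and \<sigma>=\<sigma> and \<epsilon>=\<epsilon>, OF ynn eps, of q q' r1 r2] that unfolding sb_def by auto
  have pos: "0 < r1" if "r1 \<in> sb q" "q \<in> {1..m}" for r1 q
  proof -
    have "0 \<le> submax y \<sigma> \<epsilon> (q - 1)" using sm_mono[where m=m and y=y and \<sigma>=\<sigma> and \<epsilon>=\<epsilon>, OF ynn eps, of 0 "q - 1"] that by (auto simp: sm_0)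
    then show ?thesis using that by (simp add: sb_def sb_bounds)
  qed
  have key: "(ch ` Op \<in> {S. Q (card (S \<inter> {1..<r})) \<and> r \<in> S}) \<longleftrightarrow> cond \<and> ch P = r"
    if ch: "ch \<in> set_pmf Pi" for ch
  proof -
    have chs: "\<forall>q\<in>Op. ch q \<in> sb q" using supp[OF ch] .
    have OS: "Op \<subseteq> {1..m}" by (auto simp: Op_def)
    have rin: "r \<in> ch ` Op \<longleftrightarrow> P \<in> Op \<and> ch P = r"
    proof
      assume "r \<in> ch ` Op"
      then obtain q where q: "q \<in> Op" "r = ch q" by auto
      have "q = P"
      proof (rule ccontr)
        assume "q \<noteq> P"
        then consider "q < P" | "P < q" by linarith
        then show False
        proof cases
          case 1 then show False using ord[of q P r r] chs q rP P by (auto simp: sb_def)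
        next
          case 2 then show False using ord[of P q r r] chs q rP OS by (auto simp: sb_def)
        qed
      qed
      then show "P \<in> Op \<and> ch P = r" using q by simp
    qed auto
    have cardeq: "card (ch ` Op \<inter> {1..<r}) = card {q\<in>{1..m}. Y (\<sigma> q) = 1 \<and> q < P}"
      if PO: "P \<in> Op" and chP: "ch P = r"
    proof -
      have "ch ` Op \<inter> {1..<r} = ch ` {q\<in>Op. q < P}"
      proof
        show "ch ` Op \<inter> {1..<r} \<subseteq> ch ` {q\<in>Op. q < P}"
        proof
          fix x assume "x \<in> ch ` Op \<inter> {1..<r}"
          then obtain q where q: "q \<in> Op" "x = ch q" "ch q < r" by auto
          have "q < P"
          proof (rule ccontr)
            assume "\<not> q < P"
            then consider "q = P" | "P < q" by linarith
            then show False
            proof cases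
              case 1 then show False using q chP by simp
            next
              case 2 then show False using ord[of P q r "ch q"] chs q rP OS by (auto simp: sb_def)
            qed
          qed
          then show "x \<in> ch ` {q\<in>Op. q < P}" using q by auto
        qed
      next
        show "ch ` {q\<in>Op. q < P} \<subseteq> ch ` Op \<inter> {1..<r}"
        proof
          fix x assume "x \<in> ch ` {q\<in>Op. q < P}"
          then obtain q where q: "q \<in> Op" "q < P" "x = ch q" by auto
          have "ch q < r" using ord[of q P "ch q" r] chs q rP P by (auto simp: sb_def)
          moreover have "0 < ch q" using pos[of "ch q" q] chs q OS by auto
          ultimately show "x \<in> ch ` Op \<inter> {1..<r}" using q by auto
        qed
      qed
      moreover have "inj_on ch {q\<in>Op. q < P}"
      proof (rule inj_onI)
        fix q q' assume q: "q \<in> {q\<in>Op. q < P}" and q': "q' \<in> {q\<in>Op. q < P}" and e: "ch q = ch q'"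
        have qm: "q \<in> {1..m}" "q' \<in> {1..m}" using q q' OS by auto
        have c1: "ch q \<in> sb q" "ch q' \<in> sb q'" using chs q q' by auto
        show "q = q'"
        proof (rule ccontr)
          assume "q \<noteq> q'"
          then consider "q < q'" | "q' < q" by linarith
          then show False
          proof cases
            case 1 then show False using ord[OF 1 qm(2) c1(1) c1(2)] e by simp
          next
            case 2 then show False using ord[OF 2 qm(1) c1(2) c1(1)] e by simp
          qed
        qed
      qed
      ultimately have "card (ch ` Op \<inter> {1..<r}) = card {q\<in>Op. q < P}" by (simp add: card_image)
      also have "{q\<in>Op. q < P} = {q\<in>{1..m}. Y (\<sigma> q) = 1 \<and> q < P}" by (auto simp: Op_def)
      finally show ?thesis .
    qed
    have PO: "P \<in> Op \<longleftrightarrow> Y (\<sigma> P) = 1" using P by (simp add: Op_def)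
    show ?thesis using rin cardeq PO unfolding cond_def by auto
  qed
  have "emeasure (measure_pmf (map_pmf (\<lambda>ch. ch ` Op) Pi)) {S. Q (card (S \<inter> {1..<r})) \<and> r \<in> S}
      = emeasure (measure_pmf Pi) ((\<lambda>ch. ch ` Op) -` {S. Q (card (S \<inter> {1..<r})) \<and> r \<in> S} \<inter> set_pmf Pi)"
    by (simp add: emeasure_Int_set_pmf)
  also have "(\<lambda>ch. ch ` Op) -` {S. Q (card (S \<inter> {1..<r})) \<and> r \<in> S} \<inter> set_pmf Pi
      = (if cond then {ch. ch P = r} else {}) \<inter> set_pmf Pi"
    using key by auto
  also have "emeasure (measure_pmf Pi) \<dots> = emeasure (measure_pmf Pi) (if cond then {ch. ch P = r} else {})"
    by (simp add: emeasure_Int_set_pmf)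
  also have "\<dots> = (if cond then emeasure (measure_pmf (pmf_of_set (sb P))) {r} else 0)"
  proof (cases cond)
    case True
    then have PO: "P \<in> Op" using P by (simp add: cond_def Op_def)
    have "emeasure (measure_pmf Pi) {ch. ch P = r} = emeasure (measure_pmf (map_pmf (\<lambda>f. f P) Pi)) {r}"
      by (simp add: vimage_def)
    also have "map_pmf (\<lambda>f. f P) Pi = pmf_of_set (sb P)"
      unfolding Pi_def using Pi_pmf_component[OF finO, of P 0 "\<lambda>p. pmf_of_set (sb p)"] PO by simp
    finally show ?thesis using True by simp
  qed simp
  finally show ?thesis unfolding Op_def Pi_def sb_def cond_def .
qed

lemma phi_form:
  assumes "finite L" "Pf \<in> U" "U \<subseteq> L"
  shows "phi True Pf U c L f = f Pf * (\<Prod>i\<in>U. 1 - c * f i)"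
proof -
  have "phi True Pf U c L f = (\<Prod>i\<in>L. (if i = Pf then f i else 1) * (if i \<in> U then 1 - c * f i else 1))"
    unfolding phi_def wv_def by simp
  also have "\<dots> = (\<Prod>i\<in>L. (if i = Pf then f i else 1)) * (\<Prod>i\<in>L. (if i \<in> U then 1 - c * f i else 1))"
    by (rule prod.distrib)
  also have "(\<Prod>i\<in>L. (if i = Pf then f i else 1)) = f Pf" using assms by (auto simp: prod.delta)
  also have "(\<Prod>i\<in>L. (if i \<in> U then 1 - c * f i else 1)) = (\<Prod>i\<in>L \<inter> U. 1 - c * f i)"
    using assms(1) by (simp add: prod.If_cases)
  also have "L \<inter> U = U" using assms by auto
  finally show ?thesis .
qed

lemma phi_marg:
  assumes "finite L" "i \<in> L"
  shows "phi False Pf {i} 1 L f = 1 - f i"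
proof -
  have "phi False Pf {i} 1 L f = (\<Prod>j\<in>L. if i = j then 1 - f j else 1)"
    unfolding phi_def wv_def by (intro prod.cong) auto
  also have "\<dots> = 1 - f i" using assms by (simp add: prod.delta)
  finally show ?thesis .
qed

lemma pot_Y:
  assumes "distinct (leaves T)" "set (leaves T) = {1..m}" "\<forall>i\<in>{1..m}. 0 \<le> y i \<and> y i \<le> 1"
    and "0 \<le> c" "c \<le> 1" "be \<longrightarrow> Pf \<in> U"
  shows "(\<integral>\<^sup>+Y. ennreal (phi be Pf U c {1..m} Y) \<partial>(Y_dist y T)) \<le> ennreal (phi be Pf U c {1..m} y)"
  using pot[of T y c be Pf U] assms by (simp add: Y_dist_def)

lemma marg:
  assumes d: "distinct (leaves T)" and sl: "set (leaves T) = {1..m}"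
    and y01: "\<forall>i\<in>{1..m}. 0 \<le> y i \<and> y i \<le> 1" and ys: "(\<Sum>i=1..m. y i) = real k"
    and i: "i \<in> {1..m}"
  shows "y i \<le> measure_pmf.prob (Y_dist y T) {Y. Y i = 1}"
proof -
  have "(\<integral>\<^sup>+Y. ennreal (phi False i {i} 1 {1..m} Y) \<partial>(Y_dist y T)) \<le> ennreal (phi False i {i} 1 {1..m} y)"
    by (rule pot_Y[OF d sl y01]) auto
  then have A: "(\<integral>\<^sup>+Y. ennreal (1 - Y i) \<partial>(Y_dist y T)) \<le> ennreal (1 - y i)"
    using i by (simp add: phi_marg)
  have "(\<integral>\<^sup>+Y. ennreal (1 - Y i) \<partial>(Y_dist y T)) = (\<integral>\<^sup>+Y. indicator {Y. Y i \<noteq> 1} Y \<partial>(Y_dist y T))"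
  proof (rule nn_integral_cong_AE, rule AE_pmfI)
    fix Y assume "Y \<in> set_pmf (Y_dist y T)"
    then have "Y i = 0 \<or> Y i = 1" using Y_support[OF d sl y01 ys] i by blast
    then show "ennreal (1 - Y i) = indicator {Y. Y i \<noteq> 1} Y" by auto
  qed
  also have "\<dots> = emeasure (measure_pmf (Y_dist y T)) {Y. Y i \<noteq> 1}" by simp
  also have "\<dots> = ennreal (measure_pmf.prob (Y_dist y T) {Y. Y i \<noteq> 1})"
    by (simp add: measure_pmf.emeasure_eq_measure)
  also have "{Y. Y i \<noteq> 1} = UNIV - {Y. Y i = 1}" by auto
  also have "measure_pmf.prob (Y_dist y T) (UNIV - {Y. Y i = 1}) = 1 - measure_pmf.prob (Y_dist y T) {Y. Y i = 1}"
    using measure_pmf.prob_compl[of "{Y. Y i = 1}" "Y_dist y T"] by simp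
  finally have "ennreal (1 - measure_pmf.prob (Y_dist y T) {Y. Y i = 1}) \<le> ennreal (1 - y i)" using A by simp
  then show ?thesis using y01 i by (simp add: ennreal_le_iff)
qed

lemma main_bound:
  assumes d: "distinct (leaves T)" and sl: "set (leaves T) = {1..m}"
    and y01: "\<forall>i\<in>{1..m}. 0 \<le> y i \<and> y i \<le> 1" and ys: "(\<Sum>i=1..m. y i) = real k"
    and sig: "bij_betw \<sigma> {1..m} {1..m}" and eps: "0 < \<epsilon>"
    and yint0: "\<forall>i\<in>{1..m}. \<exists>q::nat. y i / \<epsilon> = real q"
    and P: "P \<in> {1..m}" and rP: "r \<in> sub_blk y \<sigma> \<epsilon> P"
    and t1: "1 \<le> t" and mu: "real t < real r * \<epsilon>"
  shows "H m y T \<sigma> \<epsilon> r (t - 1) \<le> exp (- real r * \<epsilon>) * (exp 1 * real r * \<epsilon> / real t) ^ t"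
proof -
  have sigm: "\<sigma> q \<in> {1..m}" if "q \<in> {1..m}" for q by (rule bij_betw_apply[OF sig that])
  have yint: "\<forall>q\<in>{1..m}. \<exists>n::nat. y (\<sigma> q) / \<epsilon> = real n"
  proof
    fix q assume "q \<in> {1..m}"
    then show "\<exists>n::nat. y (\<sigma> q) / \<epsilon> = real n" using yint0 sigm by simp
  qed
  have ynn: "\<forall>q\<in>{1..m}. 0 \<le> y (\<sigma> q)"
  proof
    fix q assume "q \<in> {1..m}"
    then show "0 \<le> y (\<sigma> q)" using y01 sigm by simp
  qed
  define \<mu> where "\<mu> = real r * \<epsilon>"
  define lam where "lam = real t / \<mu>"
  define c where "c = 1 - lam"
  define B where "B = exp (- real r * \<epsilon>) * (exp 1 * real r * \<epsilon> / real t) ^ t"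
  have t0: "0 < real t" using t1 by simp
  have mupos: "0 < \<mu>" using mu t0 unfolding \<mu>_def by linarith
  have lam1: "0 < lam" unfolding lam_def using t0 mupos by simp
  have lam2: "lam < 1" unfolding lam_def using mu mupos unfolding \<mu>_def by simp
  note lam = lam1 lam2
  have c: "0 \<le> c" "c \<le> 1" using lam unfolding c_def by auto
  define Pf where "Pf = \<sigma> P"
  define U where "U = \<sigma> ` {1..P}"
  have PfU: "Pf \<in> U" using P unfolding Pf_def U_def by auto
  have UL: "U \<subseteq> {1..m}" using P sigm unfolding U_def by auto
  have injU: "inj_on \<sigma> {1..P}"
    by (rule inj_on_subset[OF bij_betw_imp_inj_on[OF sig]]) (use P in auto)
  have prodU: "(\<Prod>i\<in>U. g i) = (\<Prod>q\<in>{1..P}. g (\<sigma> q))" for g :: "nat \<Rightarrow> real"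
    unfolding U_def using injU by (simp add: prod.reindex)
  define cnt where "cnt = (\<lambda>Y :: nat \<Rightarrow> real. card {q\<in>{1..m}. Y (\<sigma> q) = 1 \<and> q < P})"
  define \<kappa> where "\<kappa> = emeasure (measure_pmf (pmf_of_set (sub_blk y \<sigma> \<epsilon> P))) {r}"
  define Yd where "Yd = Y_dist y T"
  have Ysup: "\<forall>q\<in>{1..m}. (Y (\<sigma> q) = 0 \<or> Y (\<sigma> q) = 1) \<and> (Y (\<sigma> q) = 1 \<longrightarrow> 0 < y (\<sigma> q))"
    if "Y \<in> set_pmf Yd" for Y
  proof
    fix q assume q: "q \<in> {1..m}"
    have "(Y (\<sigma> q) = 0 \<or> Y (\<sigma> q) = 1) \<and> (y (\<sigma> q) = 0 \<longrightarrow> Y (\<sigma> q) = 0)"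
      using Y_support[OF d sl y01 ys, of Y] that sigm[OF q] unfolding Yd_def by blast
    then show "(Y (\<sigma> q) = 0 \<or> Y (\<sigma> q) = 1) \<and> (Y (\<sigma> q) = 1 \<longrightarrow> 0 < y (\<sigma> q))"
      using ynn q by force
  qed
  have NE: "emeasure (measure_pmf (Z_dist m y T \<sigma> \<epsilon>)) {S. card (S \<inter> {1..<r}) \<le> t - 1 \<and> r \<in> S}
      = (\<integral>\<^sup>+Y. (if Y (\<sigma> P) = 1 \<and> cnt Y \<le> t - 1 then \<kappa> else 0) \<partial>Yd)"
    unfolding Z_dist_def Yd_def[symmetric] emeasure_bind_pmf
  proof (rule nn_integral_cong_AE, rule AE_pmfI)
    fix Y assume Y: "Y \<in> set_pmf Yd"
    have Ys: "\<forall>q\<in>{1..m}. Y (\<sigma> q) = 1 \<longrightarrow> 0 < y (\<sigma> q)" using Ysup[OF Y] by blast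
    show "emeasure (measure_pmf (map_pmf (\<lambda>ch. ch ` {p \<in> {1..m}. Y (\<sigma> p) = 1})
            (Pi_pmf {p \<in> {1..m}. Y (\<sigma> p) = 1} 0 (\<lambda>p. pmf_of_set (sub_blk y \<sigma> \<epsilon> p)))))
            {S. card (S \<inter> {1..<r}) \<le> t - 1 \<and> r \<in> S}
          = (if Y (\<sigma> P) = 1 \<and> cnt Y \<le> t - 1 then \<kappa> else 0)"
      using inner_meas[where Q="\<lambda>n. n \<le> t - 1", OF yint ynn eps P rP Ys] unfolding cnt_def \<kappa>_def by simp
  qed
  have DE: "emeasure (measure_pmf (Z_dist m y T \<sigma> \<epsilon>)) {S. r \<in> S}
      = (\<integral>\<^sup>+Y. (if Y (\<sigma> P) = 1 then \<kappa> else 0) \<partial>Yd)"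
    unfolding Z_dist_def Yd_def[symmetric] emeasure_bind_pmf
  proof (rule nn_integral_cong_AE, rule AE_pmfI)
    fix Y assume Y: "Y \<in> set_pmf Yd"
    have Ys: "\<forall>q\<in>{1..m}. Y (\<sigma> q) = 1 \<longrightarrow> 0 < y (\<sigma> q)" using Ysup[OF Y] by blast
    show "emeasure (measure_pmf (map_pmf (\<lambda>ch. ch ` {p \<in> {1..m}. Y (\<sigma> p) = 1})
            (Pi_pmf {p \<in> {1..m}. Y (\<sigma> p) = 1} 0 (\<lambda>p. pmf_of_set (sub_blk y \<sigma> \<epsilon> p)))))
            {S. r \<in> S}
          = (if Y (\<sigma> P) = 1 then \<kappa> else 0)"
      using inner_meas[where Q="\<lambda>n. True", OF yint ynn eps P rP Ys] unfolding \<kappa>_def by simp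
  qed
  have phiY: "1 \<le> (1 / lam) ^ t * phi True Pf U c {1..m} Y"
    if Y: "Y \<in> set_pmf Yd" and cond: "Y (\<sigma> P) = 1" "cnt Y \<le> t - 1" for Y
  proof -
    have Y01: "\<forall>q\<in>{1..m}. Y (\<sigma> q) = 0 \<or> Y (\<sigma> q) = 1" using Ysup[OF Y] by blast
    have "phi True Pf U c {1..m} Y = Y Pf * (\<Prod>q\<in>{1..P}. 1 - c * Y (\<sigma> q))"
      using phi_form[OF _ PfU UL, of c Y] prodU by simp
    also have "(\<Prod>q\<in>{1..P}. 1 - c * Y (\<sigma> q)) = (\<Prod>q\<in>{1..P}. if Y (\<sigma> q) = 1 then lam else 1)"
    proof (rule prod.cong)
      fix q assume "q \<in> {1..P}"
      then have "Y (\<sigma> q) = 0 \<or> Y (\<sigma> q) = 1" using Y01 P by auto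
      then show "1 - c * Y (\<sigma> q) = (if Y (\<sigma> q) = 1 then lam else 1)" unfolding c_def by auto
    qed simp
    also have "\<dots> = lam ^ card ({1..P} \<inter> {q. Y (\<sigma> q) = 1})" by (simp add: prod.If_cases)
    also have "{1..P} \<inter> {q. Y (\<sigma> q) = 1} = insert P {q\<in>{1..m}. Y (\<sigma> q) = 1 \<and> q < P}"
      using P cond by auto
    also have "card \<dots> = Suc (cnt Y)" unfolding cnt_def by (subst card_insert_disjoint) auto
    finally have ph: "phi True Pf U c {1..m} Y = lam ^ Suc (cnt Y)" using cond unfolding Pf_def by simp
    have "lam ^ t \<le> lam ^ Suc (cnt Y)" using cond t1 lam by (intro power_decreasing) auto
    then have "(1 / lam) ^ t * lam ^ t \<le> (1 / lam) ^ t * lam ^ Suc (cnt Y)"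
      using lam by (intro mult_left_mono) auto
    moreover have "(1 / lam) ^ t * lam ^ t = 1" using lam by (simp add: power_mult_distrib[symmetric])
    ultimately show ?thesis using ph by simp
  qed
  have phiy: "(1 / lam) ^ t * phi True Pf U c {1..m} y \<le> B * y Pf"
  proof -
    have "phi True Pf U c {1..m} y = y Pf * (\<Prod>q\<in>{1..P}. 1 - c * y (\<sigma> q))"
      using phi_form[OF _ PfU UL, of c y] prodU by simp
    also have "(\<Prod>q\<in>{1..P}. 1 - c * y (\<sigma> q)) \<le> (\<Prod>q\<in>{1..P}. exp (- (c * y (\<sigma> q))))"
    proof (rule prod_mono)
      fix q assume q: "q \<in> {1..P}"
      then have "0 \<le> y (\<sigma> q)" "y (\<sigma> q) \<le> 1" using y01 sigm P by auto
      then have "c * y (\<sigma> q) \<le> 1" using c mult_mono[of c 1 "y (\<sigma> q)" 1] by simp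
      then show "0 \<le> 1 - c * y (\<sigma> q) \<and> 1 - c * y (\<sigma> q) \<le> exp (- (c * y (\<sigma> q)))"
        using exp_ge_add_one_self[of "- (c * y (\<sigma> q))"] by simp
    qed
    also have "\<dots> = exp (- (c * (\<Sum>q\<in>{1..P}. y (\<sigma> q))))"
      by (simp add: exp_sum[symmetric] sum_negf sum_distrib_left)
    also have "\<dots> \<le> exp (- (c * \<mu>))"
    proof -
      have "real r \<le> submax y \<sigma> \<epsilon> P" using rP by (simp add: sb_bounds)
      also have "submax y \<sigma> \<epsilon> P = (\<Sum>q\<in>{1..P}. y (\<sigma> q)) / \<epsilon>"
        unfolding submax_def by (simp add: sum_divide_distrib)
      finally have "\<mu> \<le> (\<Sum>q\<in>{1..P}. y (\<sigma> q))" using eps unfolding \<mu>_def by (simp add: field_simps)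
      then show ?thesis using c by (simp add: mult_left_mono)
    qed
    finally have A: "phi True Pf U c {1..m} y \<le> y Pf * exp (- (c * \<mu>))"
      using y01 sigm P unfolding Pf_def by (simp add: mult_left_mono)
    have "(1 / lam) ^ t * exp (- (c * \<mu>)) = B"
    proof -
      have cm: "c * \<mu> = \<mu> - real t" using mupos unfolding c_def lam_def by (simp add: field_simps)
      have "exp (- (c * \<mu>)) = exp (- \<mu>) * exp 1 ^ t"
        unfolding cm by (simp add: exp_diff exp_of_nat_mult[symmetric] exp_minus field_simps)
      moreover have "(1 / lam) = \<mu> / real t" unfolding lam_def by simp
      moreover have "(exp 1 * real r * \<epsilon> / real t) ^ t = exp 1 ^ t * (\<mu> / real t) ^ t"
        unfolding \<mu>_def by (simp add: power_mult_distrib[symmetric] mult.assoc)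
      ultimately show ?thesis unfolding B_def \<mu>_def by (simp add: mult_ac)
    qed
    then show ?thesis using mult_left_mono[OF A, of "(1 / lam) ^ t"] lam by (simp add: mult_ac)
  qed
  have Bnn: "0 \<le> B" unfolding B_def using eps t1 by simp
  have "(\<integral>\<^sup>+Y. (if Y (\<sigma> P) = 1 \<and> cnt Y \<le> t - 1 then \<kappa> else 0) \<partial>Yd)
      \<le> (\<integral>\<^sup>+Y. ennreal ((1 / lam) ^ t) * ennreal (phi True Pf U c {1..m} Y) * \<kappa> \<partial>Yd)"
  proof (rule nn_integral_mono_AE, rule AE_pmfI)
    fix Y assume Y: "Y \<in> set_pmf Yd"
    show "(if Y (\<sigma> P) = 1 \<and> cnt Y \<le> t - 1 then \<kappa> else 0)
        \<le> ennreal ((1 / lam) ^ t) * ennreal (phi True Pf U c {1..m} Y) * \<kappa>"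
    proof (cases "Y (\<sigma> P) = 1 \<and> cnt Y \<le> t - 1")
      case True
      have "1 \<le> (1 / lam) ^ t * phi True Pf U c {1..m} Y" using phiY[OF Y] True by auto
      then have A1: "ennreal 1 \<le> ennreal ((1 / lam) ^ t * phi True Pf U c {1..m} Y)"
        by (rule ennreal_leI)
      have E1: "ennreal ((1 / lam) ^ t * phi True Pf U c {1..m} Y)
          = ennreal ((1 / lam) ^ t) * ennreal (phi True Pf U c {1..m} Y)"
        using lam by (intro ennreal_mult') simp
      have "ennreal 1 \<le> ennreal ((1 / lam) ^ t) * ennreal (phi True Pf U c {1..m} Y)"
        using A1 unfolding E1 .
      then have "1 * \<kappa> \<le> ennreal ((1 / lam) ^ t) * ennreal (phi True Pf U c {1..m} Y) * \<kappa>"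
        by (intro mult_right_mono) auto
      then show ?thesis using True by simp
    next
      case False
      then have "(if Y (\<sigma> P) = 1 \<and> cnt Y \<le> t - 1 then \<kappa> else 0) = 0" by (simp only: if_False)
      then show ?thesis by simp
    qed
  qed
  also have "\<dots> = ennreal ((1 / lam) ^ t) * (\<integral>\<^sup>+Y. ennreal (phi True Pf U c {1..m} Y) \<partial>Yd) * \<kappa>"
    by (simp add: nn_integral_cmult nn_integral_multc)
  also have "\<dots> \<le> ennreal ((1 / lam) ^ t) * ennreal (phi True Pf U c {1..m} y) * \<kappa>"
    unfolding Yd_def using pot_Y[OF d sl y01 c, of True Pf U] PfU
    by (intro mult_right_mono mult_left_mono) auto
  also have "ennreal ((1 / lam) ^ t) * ennreal (phi True Pf U c {1..m} y) * \<kappa>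
      = ennreal ((1 / lam) ^ t * phi True Pf U c {1..m} y) * \<kappa>"
  proof -
    have "ennreal ((1 / lam) ^ t) * ennreal (phi True Pf U c {1..m} y) = ennreal ((1 / lam) ^ t * phi True Pf U c {1..m} y)"
      using lam by (intro ennreal_mult'[symmetric]) simp
    then show ?thesis by simp
  qed
  also have "\<dots> \<le> ennreal (B * y Pf) * \<kappa>"
    by (rule mult_right_mono[OF ennreal_leI[OF phiy]]) simp
  also have "ennreal (B * y Pf) * \<kappa> \<le> ennreal B * (ennreal (measure_pmf.prob Yd {Y. Y (\<sigma> P) = 1}) * \<kappa>)"
  proof -
    have "y Pf \<le> measure_pmf.prob Yd {Y. Y (\<sigma> P) = 1}"
      unfolding Yd_def Pf_def using marg[OF d sl y01 ys sigm[OF P]] .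
    then have "ennreal (B * y Pf) \<le> ennreal B * ennreal (measure_pmf.prob Yd {Y. Y (\<sigma> P) = 1})"
      using Bnn by (simp add: ennreal_mult[symmetric] mult_left_mono)
    then show ?thesis by (simp add: mult.assoc[symmetric] mult_right_mono)
  qed
  also have "ennreal (measure_pmf.prob Yd {Y. Y (\<sigma> P) = 1}) * \<kappa> = (\<integral>\<^sup>+Y. (if Y (\<sigma> P) = 1 then \<kappa> else 0) \<partial>Yd)"
  proof -
    have "(\<integral>\<^sup>+Y. (if Y (\<sigma> P) = 1 then \<kappa> else 0) \<partial>Yd) = (\<integral>\<^sup>+Y. indicator {Y. Y (\<sigma> P) = 1} Y * \<kappa> \<partial>Yd)"
      by (intro nn_integral_cong) (simp add: indicator_def)
    also have "\<dots> = emeasure (measure_pmf Yd) {Y. Y (\<sigma> P) = 1} * \<kappa>"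
      by (simp add: nn_integral_multc)
    finally show ?thesis by (simp add: measure_pmf.emeasure_eq_measure)
  qed
  finally have fin: "emeasure (measure_pmf (Z_dist m y T \<sigma> \<epsilon>)) {S. card (S \<inter> {1..<r}) \<le> t - 1 \<and> r \<in> S}
      \<le> ennreal B * emeasure (measure_pmf (Z_dist m y T \<sigma> \<epsilon>)) {S. r \<in> S}"
    unfolding NE DE .
  define Nr where "Nr = measure_pmf.prob (Z_dist m y T \<sigma> \<epsilon>) {S. card (S \<inter> {1..<r}) \<le> t - 1 \<and> r \<in> S}"
  define Dr where "Dr = measure_pmf.prob (Z_dist m y T \<sigma> \<epsilon>) {S. r \<in> S}"
  have "ennreal Nr \<le> ennreal B * ennreal Dr"
    using fin unfolding Nr_def Dr_def by (simp add: measure_pmf.emeasure_eq_measure)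
  then have "ennreal Nr \<le> ennreal (B * Dr)" unfolding ennreal_mult'[OF Bnn] .
  then have ND: "Nr \<le> B * Dr" using Bnn by (simp add: Dr_def)
  have "H m y T \<sigma> \<epsilon> r (t - 1) = Nr / Dr" unfolding H_def Nr_def Dr_def by simp
  also have "\<dots> \<le> B"
  proof (cases "Dr = 0")
    case True then show ?thesis using Bnn by simp
  next
    case False
    then have "0 < Dr" unfolding Dr_def using measure_nonneg[of "measure_pmf (Z_dist m y T \<sigma> \<epsilon>)" "{S. r \<in> S}"] by linarith
    then show ?thesis using ND by (simp add: divide_le_eq)
  qed
  finally show ?thesis unfolding B_def .
qed

theorem lemma1:
  fixes n m k :: nat and c :: "nat \<Rightarrow> nat \<Rightarrow> real"
    and x :: "nat \<Rightarrow> nat \<Rightarrow> nat \<Rightarrow> real" and y :: "nat \<Rightarrow> real"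
    and T :: ttree and j :: nat and \<sigma> :: "nat \<Rightarrow> nat" and \<epsilon> :: real
    and l t r :: nat
  assumes "k \<le> m"
    and "\<forall>i\<in>{1..m}. \<forall>j'\<in>{1..n}. 0 \<le> c i j'"
    and "lp_optimal n m k c x y"
    and "\<forall>i\<in>{1..m}. y i \<in> \<rat>"
    and "\<forall>l'\<in>{1..k}. \<forall>i\<in>{1..m}. \<forall>j'\<in>{1..n}. x l' i j' \<in> \<rat>"
    and "distinct (leaves T)" and "set (leaves T) = {1..m}"
    and "j \<in> {1..n}"
    and "bij_betw \<sigma> {1..m} {1..m}"
    and "\<forall>p\<in>{1..m}. \<forall>q\<in>{1..m}. p \<le> q \<longrightarrow> c (\<sigma> p) j \<le> c (\<sigma> q) j"
    and "\<epsilon> > 0"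
    and "\<exists>N::nat. 1 / \<epsilon> = real N"
    and "\<forall>i\<in>{1..m}. \<exists>q::nat. y i / \<epsilon> = real q"
    and "l \<in> {1..k}"
    and "t \<in> {1..l - 1}"
    and "(real l - 1) / \<epsilon> + 1 \<le> real r" and "real r \<le> real l / \<epsilon>"
  shows "H m y T \<sigma> \<epsilon> r (t - 1) \<le> exp (- real r * \<epsilon>) * (exp 1 * real r * \<epsilon> / real t) ^ t"
proof -
  note A = assms
  have feas: "lp_feasible n m k x y" using A(3) by (simp add: lp_optimal_def)
  have ys: "(\<Sum>i=1..m. y i) = real k" using feas by (simp add: lp_feasible_def)
  have y01: "\<forall>i\<in>{1..m}. 0 \<le> y i \<and> y i \<le> 1" using feas by (simp add: lp_feasible_def)
  have eps: "0 < \<epsilon>" using A(11) .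
  have l: "1 \<le> l" "l \<le> k" using A(14) by auto
  have t: "1 \<le> t" "t \<le> l - 1" using A(15) by auto
  have r1: "(real l - 1) / \<epsilon> + 1 \<le> real r" using A(16) .
  have r2: "real r \<le> real l / \<epsilon>" using A(17) .
  have lnn: "0 \<le> (real l - 1) / \<epsilon>" using l eps by simp
  have rge: "1 \<le> real r" using r1 lnn by linarith
  have "((real l - 1) / \<epsilon> + 1) * \<epsilon> \<le> real r * \<epsilon>" using r1 eps by (simp add: mult_right_mono)
  moreover have "((real l - 1) / \<epsilon> + 1) * \<epsilon> = real l - 1 + \<epsilon>"
    using eps by (simp add: distrib_right)
  ultimately have "real l - 1 + \<epsilon> \<le> real r * \<epsilon>" by simp
  moreover have "real t \<le> real l - 1" using t l by linarith
  ultimately have mu: "real t < real r * \<epsilon>" using eps by linarith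
  have sigsum: "(\<Sum>q=1..m. y (\<sigma> q)) = (\<Sum>i=1..m. y i)"
    using sum.reindex_bij_betw[OF A(9), of y] by simp
  have smm: "submax y \<sigma> \<epsilon> m = real k / \<epsilon>"
    unfolding submax_def using sigsum ys by (simp add: sum_divide_distrib[symmetric])
  have ex: "real r \<le> submax y \<sigma> \<epsilon> m"
  proof -
    have "real l / \<epsilon> \<le> real k / \<epsilon>" using l eps by (simp add: divide_right_mono)
    then show ?thesis using r2 smm by linarith
  qed
  define P where "P = (LEAST p. real r \<le> submax y \<sigma> \<epsilon> p)"
  have PP: "real r \<le> submax y \<sigma> \<epsilon> P" unfolding P_def using ex by (rule LeastI)
  have Pm: "P \<le> m" unfolding P_def using ex by (rule Least_le)
  have P0: "P \<noteq> 0"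
  proof
    assume "P = 0"
    then have "real r \<le> 0" using PP by (simp add: sm_0)
    then show False using rge by simp
  qed
  have Pprev: "submax y \<sigma> \<epsilon> (P - 1) < real r"
  proof -
    have "P - 1 < P" using P0 by simp
    then have "\<not> real r \<le> submax y \<sigma> \<epsilon> (P - 1)" unfolding P_def by (rule not_less_Least)
    then show ?thesis by simp
  qed
  have P: "P \<in> {1..m}" using Pm P0 by simp
  have rP: "r \<in> sub_blk y \<sigma> \<epsilon> P" using PP Pprev by (simp add: sb_bounds)
  show ?thesis
    by (rule main_bound[OF A(6) A(7) y01 ys A(9) eps A(13) P rP t(1) mu])
qed

end
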